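(* For $\alpha,\beta>0$ with $\alpha\beta=\pi^2$, \[ \sum_{n=1}^{\infty}\frac{e^{n\alpha}}{n\left(e^{2n\alpha}-1\right)}-\sum_{n=1}^{\infty}\frac{(-1)^n}{n\left(e^{2n\beta}-1\right)}=-\frac{1}{2}\log 2+\frac{\alpha+2\beta}{24}. \] *)

theory Defs
  imports "HOL-Analysis.Analysis"
begin

end

theory Submission
  imports Defs "HOL-Analysis.Analysis"
begin
lemma digamma_refl:
  fixes z :: complex
  assumes z: "z \<notin> \<int>"
  shows "Digamma (1 - z) - Digamma z = of_real pi * cot (of_real pi * z)"
proof -
  have z1: "z \<notin> \<int>\<^sub>\<le>\<^sub>0" using z nonpos_Ints_subset_Ints by blast
  have z2: "1 - z \<notin> \<int>\<^sub>\<le>\<^sub>0" using z nonpos_Ints_subset_Ints Ints_diff[of 1 "1-z"] by force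
  have feq: "(\<lambda>w. rGamma w * rGamma (1 - w)) = (\<lambda>w::complex. sin (of_real pi * w) / of_real pi)"
    by (rule ext) (rule rGamma_reflection_complex)
  have d1: "((\<lambda>w. rGamma w * rGamma (1 - w)) has_field_derivative
      (-rGamma z * Digamma z) * rGamma (1 - z) + rGamma z * (-rGamma (1-z) * Digamma (1-z) * (-1))) (at z)"
  proof -
    have a: "(rGamma has_field_derivative (-rGamma (1-z) * Digamma (1-z))) (at (1 - z))"
      using has_field_derivative_rGamma_no_nonpos_int[OF z2] .
    have b: "((\<lambda>w. 1 - w) has_field_derivative (-1)) (at z)"
      by (auto intro!: derivative_eq_intros)
    have c: "((\<lambda>w. rGamma (1 - w)) has_field_derivative (-rGamma (1-z) * Digamma (1-z) * (-1))) (at z)"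
      using DERIV_chain2[OF a b] by simp
    show ?thesis
      by (rule DERIV_cong[OF DERIV_mult[OF has_field_derivative_rGamma_no_nonpos_int[OF z1] c]])
        (simp add: algebra_simps)
  qed
  have d2: "((\<lambda>w::complex. sin (of_real pi * w) / of_real pi) has_field_derivative cos (of_real pi * z)) (at z)"
    by (auto intro!: derivative_eq_intros)
  from d1 have d1': "((\<lambda>w::complex. sin (of_real pi * w) / of_real pi) has_field_derivative
      (-rGamma z * Digamma z) * rGamma (1 - z) + rGamma z * (-rGamma (1-z) * Digamma (1-z) * (-1))) (at z)"
    by (simp only: feq)
  have eq: "(-rGamma z * Digamma z) * rGamma (1 - z) + rGamma z * (-rGamma (1-z) * Digamma (1-z) * (-1))
       = cos (of_real pi * z)" using DERIV_unique[OF d1' d2] .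
  have s: "sin (of_real pi * z) \<noteq> 0"
  proof
    assume "sin (of_real pi * z) = 0"
    then obtain n :: int where "of_real pi * z = of_int n * of_real pi" by (auto simp: sin_eq_0)
    hence "z = of_int n" by simp
    with z show False by auto
  qed
  have "(rGamma z * rGamma (1 - z)) * (Digamma (1 - z) - Digamma z) = cos (of_real pi * z)"
    using eq by (simp add: algebra_simps)
  hence "sin (of_real pi * z) / of_real pi * (Digamma (1 - z) - Digamma z) = cos (of_real pi * z)"
    by (simp add: rGamma_reflection_complex)
  thus ?thesis using s by (simp add: cot_def field_simps)
qed

lemma partial_id:
  fixes z :: complex
  shows "(\<Sum>n<Suc m. inverse (z + of_nat n)) - (\<Sum>n<Suc m. inverse ((1 - z) + of_nat n))
     = inverse z + (\<Sum>n<m. inverse (z + of_nat (Suc n)) - inverse (of_nat (Suc n) - z)) - inverse (of_nat (Suc m) - z)"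
proof (induction m)
  case 0
  then show ?case by simp
next
  case (Suc m)
  have e: "(1 - z) + of_nat (Suc m) = of_nat (Suc (Suc m)) - z" by simp
  have e2: "(1 - z) + of_nat m = of_nat (Suc m) - z" by simp
  show ?case using Suc by (simp add: e e2 algebra_simps)
qed

lemma coth_pfd:
  fixes x :: real
  assumes x: "x > 0"
  shows "(\<lambda>k. x / (x^2 + (real (Suc k))^2)) sums (pi / (exp (2*pi*x) - 1) - 1 / (2*x) + pi / 2)"
proof -
  define z where "z = \<i> * complex_of_real x"
  have zI: "z \<notin> \<int>"
  proof
    assume "z \<in> \<int>" then obtain n where "z = of_int n" by (auto elim: Ints_cases)
    hence "Im z = 0" by simp
    with x show False by (simp add: z_def)
  qed
  have z0: "z \<noteq> 0" using zI by auto
  have z1: "1 - z \<noteq> 0" using zI by (metis Ints_1 eq_iff_diff_eq_0)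
  have lim1: "(\<lambda>m. (\<Sum>n<m. inverse (z + of_nat n)) - (\<Sum>n<m. inverse ((1 - z) + of_nat n)))
      \<longlonglongrightarrow> Digamma (1 - z) - Digamma z"
  proof -
    have "(\<lambda>m. (of_real (ln (real m)) - (\<Sum>n<m. inverse ((1 - z) + of_nat n))) -
              (of_real (ln (real m)) - (\<Sum>n<m. inverse (z + of_nat n))))
      \<longlonglongrightarrow> Digamma (1 - z) - Digamma z"
      by (intro tendsto_diff Digamma_LIMSEQ z0 z1)
    thus ?thesis by simp
  qed
  have lim2: "(\<lambda>m. (\<Sum>n<Suc m. inverse (z + of_nat n)) - (\<Sum>n<Suc m. inverse ((1 - z) + of_nat n)))
      \<longlonglongrightarrow> Digamma (1 - z) - Digamma z"
    using LIMSEQ_Suc[OF lim1] .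
  have lim3: "(\<lambda>m. inverse (of_nat (Suc m) - z)) \<longlonglongrightarrow> 0"
  proof -
    have "norm (inverse (of_nat (Suc m) - z)) \<le> inverse (real (Suc m))" for m
    proof -
      have "real (Suc m) \<le> norm (of_nat (Suc m) - z)"
        using abs_Re_le_cmod[of "of_nat (Suc m) - z"] by (simp add: z_def)
      thus ?thesis by (simp add: norm_inverse le_imp_inverse_le)
    qed
    thus ?thesis
      by (intro Lim_null_comparison[OF _ LIMSEQ_inverse_real_of_nat]) auto
  qed
  have termeq: "inverse (z + of_nat (Suc n)) - inverse (of_nat (Suc n) - z)
      = complex_of_real (x / (x^2 + (real (Suc n))^2)) * (-2 * \<i>)" for n
  proof -
    have a: "z + of_nat (Suc n) \<noteq> 0"
    proof
      assume "z + of_nat (Suc n) = 0" hence "Im (z + of_nat (Suc n)) = 0" by simp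
      with x show False by (simp add: z_def)
    qed
    have b: "of_nat (Suc n) - z \<noteq> 0"
    proof
      assume "of_nat (Suc n) - z = 0" hence "Im (of_nat (Suc n) - z) = 0" by simp
      with x show False by (simp add: z_def)
    qed
    have c: "complex_of_real (x^2 + (real (Suc n))^2) \<noteq> 0"
    proof -
      have "x^2 + (real (Suc n))^2 > 0" using x by (simp add: add_pos_nonneg)
      thus ?thesis by (simp only: of_real_eq_0_iff)
    qed
    have d: "(z + of_nat (Suc n)) * (of_nat (Suc n) - z) = complex_of_real (x^2 + (real (Suc n))^2)"
      by (simp add: z_def algebra_simps power2_eq_square)
    show ?thesis using a b c d
      by (simp add: field_simps z_def)
  qed
  have lim4: "(\<lambda>m. (\<Sum>n<m. complex_of_real (x / (x^2 + (real (Suc n))^2))) * (-2 * \<i>))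
      \<longlonglongrightarrow> (Digamma (1 - z) - Digamma z) - inverse z + 0"
  proof -
    have "(\<lambda>m. ((\<Sum>n<Suc m. inverse (z + of_nat n)) - (\<Sum>n<Suc m. inverse ((1 - z) + of_nat n)))
         - inverse z + inverse (of_nat (Suc m) - z)) \<longlonglongrightarrow> (Digamma (1 - z) - Digamma z) - inverse z + 0"
      by (intro tendsto_intros lim2 lim3)
    moreover have "((\<Sum>n<Suc m. inverse (z + of_nat n)) - (\<Sum>n<Suc m. inverse ((1 - z) + of_nat n)))
         - inverse z + inverse (of_nat (Suc m) - z) = (\<Sum>n<m. complex_of_real (x / (x^2 + (real (Suc n))^2))) * (-2 * \<i>)" for m
      by (subst partial_id, simp only: termeq flip: sum_distrib_right, simp)
    ultimately show ?thesis by simp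
  qed
  define E where "E = exp (pi * x)"
  have E1: "E > 1" using x by (simp add: E_def)
  have cotv: "cot (complex_of_real pi * z) = - \<i> * complex_of_real ((E^2 + 1) / (E^2 - 1))"
  proof -
    have i1: "\<i> * (complex_of_real pi * z) = - complex_of_real (pi * x)" by (simp add: z_def algebra_simps)
    have c: "cos (complex_of_real pi * z) = complex_of_real ((inverse E + E) / 2)"
      unfolding cos_exp_eq i1 by (simp add: E_def exp_of_real exp_minus flip: exp_of_real)
    have s: "sin (complex_of_real pi * z) = complex_of_real ((inverse E - E) / 2) / \<i>"
      unfolding sin_exp_eq i1 by (simp add: E_def exp_of_real exp_minus flip: exp_of_real)
    have ne: "E \<noteq> 0" "E^2 - 1 \<noteq> 0" "inverse E - E \<noteq> 0" using E1 by (auto simp: field_simps) (smt (verit) mult_less_cancel_left1 power2_eq_square)+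
    have r: "((inverse E + E) / 2) / ((inverse E - E) / 2) = - ((E^2 + 1) / (E^2 - 1))"
      using ne by (simp add: field_simps power2_eq_square)
    have "cot (complex_of_real pi * z) = \<i> * complex_of_real (((inverse E + E) / 2) / ((inverse E - E) / 2))"
    proof -
      have gen: "b \<noteq> 0 \<Longrightarrow> complex_of_real a / (complex_of_real b / \<i>) = \<i> * complex_of_real (a / b)" for a b
        by (simp add: field_simps)
      show ?thesis unfolding cot_def c s by (rule gen) (use ne in simp)
    qed
    also have "\<dots> = - \<i> * complex_of_real ((E^2 + 1) / (E^2 - 1))" unfolding r by simp
    finally show ?thesis .
  qed
  have val: "((Digamma (1 - z) - Digamma z) - inverse z + 0) / (-2 * \<i>) =
      complex_of_real (pi / (exp (2*pi*x) - 1) - 1 / (2*x) + pi / 2)"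
  proof -
    have e2: "exp (2*pi*x) = E^2" by (simp add: E_def power2_eq_square flip: exp_add)
    have "E^2 - 1 \<noteq> 0" using E1 by (smt (verit) one_less_power pos2)
    define R where "R = (E^2 + 1) / (E^2 - 1)"
    have "((Digamma (1 - z) - Digamma z) - inverse z + 0) / (-2 * \<i>)
        = (complex_of_real pi * (- \<i> * complex_of_real R) - inverse (\<i> * complex_of_real x)) / (-2 * \<i>)"
      unfolding digamma_refl[OF zI] cotv R_def by (simp add: z_def)
    also have "\<dots> = complex_of_real ((pi * R - 1/x) / 2)"
      using x by (simp add: field_simps)
    also have "(pi * R - 1/x) / 2 = pi / (exp (2*pi*x) - 1) - 1 / (2*x) + pi / 2"
      unfolding e2 R_def using x \<open>E^2 - 1 \<noteq> 0\<close> by (simp add: field_simps)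
    finally show ?thesis .
  qed
  have "(\<lambda>m. (\<Sum>n<m. complex_of_real (x / (x^2 + (real (Suc n))^2))) * (-2 * \<i>) / (-2 * \<i>))
      \<longlonglongrightarrow> ((Digamma (1 - z) - Digamma z) - inverse z + 0) / (-2 * \<i>)"
    by (intro tendsto_intros lim4) simp
  note L = this
  have "(\<lambda>m. complex_of_real (\<Sum>n<m. x / (x^2 + (real (Suc n))^2)))
      \<longlonglongrightarrow> complex_of_real (pi / (exp (2*pi*x) - 1) - 1 / (2*x) + pi / 2)"
  proof -
    have eqf: "(\<Sum>n<m. complex_of_real (x / (x^2 + (real (Suc n))^2))) * (-2 * \<i>) / (-2 * \<i>)
        = complex_of_real (\<Sum>n<m. x / (x^2 + (real (Suc n))^2))" for m
    proof -
      have c: "a * (-2 * \<i>) / (-2 * \<i>) = (a::complex)" for a by (rule nonzero_mult_div_cancel_right) simp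
      show ?thesis by (simp only: c of_real_sum)
    qed
    show ?thesis using L unfolding eqf val .
  qed
  hence "(\<lambda>m. (\<Sum>n<m. x / (x^2 + (real (Suc n))^2)))
      \<longlonglongrightarrow> (pi / (exp (2*pi*x) - 1) - 1 / (2*x) + pi / 2)"
    by (subst (asm) tendsto_of_real_iff)
  thus ?thesis by (simp add: sums_def)
qed

lemma F_step:
  fixes a t :: real
  assumes a: "a > 0" and t: "t \<ge> 0"
  shows "1 / (a^2 + (t+1)^2) \<le> arctan ((t+1)/a)/a - arctan (t/a)/a"
    and "arctan ((t+1)/a)/a - arctan (t/a)/a \<le> 1 / (a^2 + t^2)"
proof -
  have der: "DERIV (\<lambda>s. arctan (s/a)/a) s :> 1 / (a^2 + s^2)" for s
  proof -
    have "DERIV (\<lambda>s. arctan (s/a)/a) s :> inverse (1 + (s/a)^2) * (1/a) / a"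
      using a by (auto intro!: derivative_eq_intros)
    moreover have "inverse (1 + (s/a)^2) * (1/a) / a = 1 / (a^2 + s^2)"
    proof -
      have "a^2 + s^2 > 0" using a by (simp add: add_pos_nonneg)
      hence "a * (a * a + s * s) > 0" using a by (simp add: power2_eq_square)
      thus ?thesis using a by (simp add: field_simps power2_eq_square)
    qed
    ultimately show ?thesis by simp
  qed
  obtain z where z: "t < z" "z < t + 1" "arctan ((t+1)/a)/a - arctan (t/a)/a = ((t+1) - t) * (1 / (a^2 + z^2))"
    using MVT2[of t "t+1" "\<lambda>s. arctan (s/a)/a" "\<lambda>s. 1 / (a^2 + s^2)"] der by auto
  have p1: "a^2 + t^2 > 0" using a by (simp add: add_pos_nonneg)
  have "t^2 \<le> z^2" using z t by (intro power_mono) auto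
  moreover have "z^2 \<le> (t+1)^2" using z t by (intro power_mono) auto
  ultimately show "1 / (a^2 + (t+1)^2) \<le> arctan ((t+1)/a)/a - arctan (t/a)/a"
    and "arctan ((t+1)/a)/a - arctan (t/a)/a \<le> 1 / (a^2 + t^2)"
    unfolding z(3) using p1 a by (auto intro!: divide_left_mono mult_pos_pos add_pos_nonneg)
qed

lemma tail_bounds:
  fixes a :: real and M :: nat
  assumes a: "a > 0" and M: "M > 0"
  shows "summable (\<lambda>k. 1 / (a^2 + (real (Suc (k + M)))^2))"
    and "(\<Sum>k. 1 / (a^2 + (real (Suc (k + M)))^2)) \<le> arctan (a / real M) / a"
    and "arctan (a / real M) / a - 1 / (a^2 + (real M)^2) \<le> (\<Sum>k. 1 / (a^2 + (real (Suc (k + M)))^2))"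
proof -
  define F where "F t = arctan (t/a)/a" for t
  have lim: "(\<lambda>k. F (real (k + M))) \<longlonglongrightarrow> (pi/2)/a"
  proof -
    have "filterlim (\<lambda>k. real (k + M) / a) at_top sequentially"
    proof -
      have g: "filterlim (\<lambda>k. real (k + M)) at_top sequentially"
        by (rule filterlim_compose[OF filterlim_real_sequentially filterlim_add_const_nat_at_top])
      have "filterlim (\<lambda>k. inverse a * real (k+M)) at_top sequentially"
        by (rule filterlim_tendsto_pos_mult_at_top[OF tendsto_const _ g]) (use a in simp)
      moreover have "(\<lambda>k. real (k + M) / a) = (\<lambda>k. inverse a * real (k + M))"
        by (simp add: divide_inverse mult.commute)
      ultimately show ?thesis by simp
    qed
    hence "(\<lambda>k. arctan (real (k + M) / a)) \<longlonglongrightarrow> pi/2"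
      by (rule filterlim_compose[OF tendsto_arctan_at_top])
    thus ?thesis unfolding F_def using a by (intro tendsto_divide) auto
  qed
  have tel: "(\<lambda>k. F (real (Suc k + M)) - F (real (k + M))) sums ((pi/2)/a - F (real M))"
    using telescope_sums[OF lim] by simp
  have inv: "(pi/2)/a - F (real M) = arctan (a / real M) / a"
  proof -
    have "arctan (1 / (real M / a)) = sgn (real M / a) * pi / 2 - arctan (real M / a)"
      by (rule Transcendental.arctan_inverse) (use a M in auto)
    hence "arctan (a / real M) = pi/2 - arctan (real M / a)" using a M by simp
    thus ?thesis using a M by (simp add: F_def diff_divide_distrib)
  qed
  have up: "1 / (a^2 + (real (Suc (k + M)))^2) \<le> F (real (Suc k + M)) - F (real (k + M))" for k
    using F_step(1)[OF a, of "real (k+M)"] by (simp add: F_def add_ac)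
  have lo: "F (real (Suc k + M)) - F (real (k + M)) \<le> 1 / (a^2 + (real (k + M))^2)" for k
    using F_step(2)[OF a, of "real (k+M)"] by (simp add: F_def add_ac)
  have nn: "0 \<le> 1 / (a^2 + (real (Suc (k + M)))^2)" for k by (simp add: add_pos_nonneg)
  show sm: "summable (\<lambda>k. 1 / (a^2 + (real (Suc (k + M)))^2))"
    by (rule summable_comparison_test'[OF sums_summable[OF tel], of 0]) (use up nn in auto)
  show "(\<Sum>k. 1 / (a^2 + (real (Suc (k + M)))^2)) \<le> arctan (a / real M) / a"
    using suminf_le[OF up sm sums_summable[OF tel]] tel inv by (simp add: sums_iff)
  have sh: "(\<lambda>k. 1 / (a^2 + (real (k + M))^2)) sums ((\<Sum>k. 1 / (a^2 + (real (Suc (k + M)))^2)) + 1 / (a^2 + (real M)^2))"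
  proof -
    have "(\<lambda>k. 1 / (a^2 + (real (Suc k + M))^2)) sums (\<Sum>k. 1 / (a^2 + (real (Suc (k + M)))^2))"
      using summable_sums[OF sm] by simp
    thus ?thesis using sums_Suc_iff[where f="\<lambda>k. 1 / (a^2 + (real (k + M))^2)"] by simp
  qed
  show "arctan (a / real M) / a - 1 / (a^2 + (real M)^2) \<le> (\<Sum>k. 1 / (a^2 + (real (Suc (k + M)))^2))"
    using sums_le[OF lo tel sh] inv by simp
qed

lemma riemann_dec:
  fixes h :: "real \<Rightarrow> real" and N :: nat
  assumes cont: "continuous_on {0..1} h"
    and dec: "\<And>s t. 0 \<le> s \<Longrightarrow> s \<le> t \<Longrightarrow> t \<le> 1 \<Longrightarrow> h t \<le> h s"
    and N: "N > 0"
  shows "(\<Sum>n<N. h (real (Suc n) / N)) / N \<le> integral {0..1} h"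
    and "integral {0..1} h \<le> (\<Sum>n<N. h (real (Suc n) / N)) / N + (h 0 - h 1) / N"
proof -
  have int: "h integrable_on {a..b}" if "0 \<le> a" "a \<le> b" "b \<le> 1" for a b
    by (rule integrable_subinterval_real[OF integrable_continuous_interval[OF cont]]) (use that in auto)
  have cell: "h (real (Suc m) / N) / N \<le> integral {real m / N..real (Suc m) / N} h \<and>
      integral {real m / N..real (Suc m) / N} h \<le> h (real m / N) / N" if m: "m < N" for m
  proof -
    have le: "real m / N \<le> real (Suc m) / N" using N by (simp add: divide_right_mono)
    have ge0: "0 \<le> real m / N" by simp
    have le1: "real (Suc m) / N \<le> 1" using m N by simp
    have ii: "h integrable_on {real m / N..real (Suc m) / N}" by (rule int) (use le1 le in auto)
    have cnt: "integral {real m / N..real (Suc m) / N} (\<lambda>x. c) = c / N" for c using le N by (simp add: field_simps)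
    have "integral {real m / N..real (Suc m) / N} (\<lambda>x. h (real (Suc m) / N)) \<le> integral {real m / N..real (Suc m) / N} h"
    proof (rule integral_le[OF _ ii])
      fix x assume "x \<in> {real m / N..real (Suc m) / N}"
      hence x1: "real m / N \<le> x" "x \<le> real (Suc m) / N" by auto
      show "h (real (Suc m) / N) \<le> h x" by (rule dec) (use ge0 le1 x1 in linarith)+
    qed (metis box_real(2) integrable_const)
    moreover have "integral {real m / N..real (Suc m) / N} h \<le> integral {real m / N..real (Suc m) / N} (\<lambda>x. h (real m / N))"
    proof (rule integral_le[OF ii])
      fix x assume "x \<in> {real m / N..real (Suc m) / N}"
      hence x1: "real m / N \<le> x" "x \<le> real (Suc m) / N" by auto
      show "h x \<le> h (real m / N)" by (rule dec) (use ge0 le1 x1 in linarith)+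
    qed (metis box_real(2) integrable_const)
    ultimately show ?thesis unfolding cnt by simp
  qed
  have main: "m \<le> N \<Longrightarrow> (\<Sum>n<m. h (real (Suc n) / N)) / N \<le> integral {0..real m / N} h \<and>
      integral {0..real m / N} h \<le> (\<Sum>n<m. h (real n / N)) / N" for m
  proof (induction m)
    case 0
    then show ?case by simp
  next
    case (Suc m)
    hence m: "m < N" by simp
    have comb: "integral {0..real m / N} h + integral {real m / N..real (Suc m) / N} h = integral {0..real (Suc m) / N} h"
      by (rule Henstock_Kurzweil_Integration.integral_combine) (use m N in \<open>auto simp: divide_right_mono intro!: int\<close>)
    show ?case using Suc.IH m cell[OF m] comb[symmetric] by (simp add: add_divide_distrib)
  qed
  from main[of N] N
  have A: "(\<Sum>n<N. h (real (Suc n) / N)) / N \<le> integral {0..1} h"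
      and B: "integral {0..1} h \<le> (\<Sum>n<N. h (real n / N)) / N" by auto
  show "(\<Sum>n<N. h (real (Suc n) / N)) / N \<le> integral {0..1} h" by (rule A)
  obtain k where k: "N = Suc k" using N not0_implies_Suc by blast
  have "(\<Sum>n<N. h (real n / N)) = (\<Sum>n<N. h (real (Suc n) / N)) + (h 0 - h 1)"
  proof -
    have e1: "(\<Sum>n<Suc k. h (real n / real (Suc k))) = h 0 + (\<Sum>n<k. h (real (Suc n) / real (Suc k)))"
      by (subst sum.lessThan_Suc_shift) simp
    have e2: "(\<Sum>n<Suc k. h (real (Suc n) / real (Suc k))) = (\<Sum>n<k. h (real (Suc n) / real (Suc k))) + h 1"
      by (subst sum.lessThan_Suc) simp
    show ?thesis unfolding k e1 e2 by simp
  qed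
  thus "integral {0..1} h \<le> (\<Sum>n<N. h (real (Suc n) / N)) / N + (h 0 - h 1) / N"
    using B by (simp add: add_divide_distrib)
qed

lemma arctan_le_self': "t \<ge> 0 \<Longrightarrow> arctan t \<le> (t::real)"
proof -
  assume t: "t \<ge> 0"
  have "(\<lambda>u. u - arctan u) 0 \<le> (\<lambda>u. u - arctan u) t"
  proof (rule DERIV_nonneg_imp_nondecreasing[OF t])
    fix x :: real assume "0 \<le> x" "x \<le> t"
    have "DERIV (\<lambda>u. u - arctan u) x :> 1 - inverse (1 + x^2)"
      by (auto intro!: derivative_eq_intros)
    moreover have "inverse (1 + x^2) \<le> 1" by (simp add: inverse_le_1_iff)
    ultimately show "\<exists>y. DERIV (\<lambda>u. u - arctan u) x :> y \<and> y \<ge> 0" by force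
  qed
  thus ?thesis by simp
qed

lemma arctan_ge': "t \<ge> 0 \<Longrightarrow> t / (1 + t^2) \<le> arctan (t::real)"
proof -
  assume t: "t \<ge> 0"
  have "(\<lambda>u. arctan u - u / (1 + u^2)) 0 \<le> (\<lambda>u. arctan u - u / (1 + u^2)) t"
  proof (rule DERIV_nonneg_imp_nondecreasing[OF t])
    fix x :: real assume x0: "0 \<le> x" "x \<le> t"
    have p: "1 + x^2 > 0" by (simp add: add_pos_nonneg)
    have dq: "DERIV (\<lambda>u. u / (1 + u^2)) x :> (1 * (1 + x^2) - (2 * x) * x) / ((1 + x^2) ^ Suc (Suc 0))"
    proof (rule DERIV_quotient[OF DERIV_ident])
      show "DERIV (\<lambda>u. 1 + u^2) x :> 2 * x"
        by (auto intro!: derivative_eq_intros)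
    qed (use p in auto)
    have "DERIV (\<lambda>u. arctan u - u / (1 + u^2)) x :> inverse (1 + x^2) - (1 * (1 + x^2) - (2 * x) * x) / ((1 + x^2) ^ Suc (Suc 0))"
      by (rule DERIV_diff[OF DERIV_arctan dq])
    moreover have "inverse (1 + x^2) - (1 * (1 + x^2) - (2 * x) * x) / ((1 + x^2) ^ Suc (Suc 0)) = (2 * x) * x / (1 + x^2) ^ Suc (Suc 0)"
    proof -
      have gen: "inverse D - (1 * D - y) / D ^ Suc (Suc 0) = y / D ^ Suc (Suc 0)" if "D \<noteq> 0" for D y :: real
        using that by (simp add: field_simps)
      show ?thesis by (rule gen) (use p in simp)
    qed
    moreover have "(2 * x) * x / (1 + x^2) ^ Suc (Suc 0) \<ge> 0" using x0 by simp
    ultimately show "\<exists>y. DERIV (\<lambda>u. arctan u - u / (1 + u^2)) x :> y \<and> y \<ge> 0" by auto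
  qed
  thus ?thesis by simp
qed

definition hh :: "real \<Rightarrow> real" where "hh t = (if t = 0 then 1 else arctan t / t)"

lemma hh_dec_pos:
  assumes "0 < s" "s \<le> t"
  shows "arctan t / t \<le> arctan s / s"
proof (rule DERIV_nonpos_imp_nonincreasing[OF assms(2)])
  fix x assume x: "s \<le> x" "x \<le> t"
  hence x0: "x > 0" using assms by linarith
  have p: "1 + x^2 > 0" by (simp add: add_pos_nonneg)
  have "DERIV (\<lambda>u. arctan u / u) x :> (inverse (1 + x^2) * x - arctan x * 1) / (x * x)"
    using x0 by (auto intro!: derivative_eq_intros)
  moreover have "(inverse (1 + x^2) * x - arctan x * 1) / (x * x) \<le> 0"
  proof -
    have "inverse (1 + x^2) * x \<le> arctan x" using arctan_ge'[of x] x0 by (simp add: field_simps)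
    thus ?thesis by (intro divide_nonpos_pos) (use x0 in auto)
  qed
  ultimately show "\<exists>y. DERIV (\<lambda>u. arctan u / u) x :> y \<and> y \<le> 0" by auto
qed

lemma hh_dec: "0 \<le> s \<Longrightarrow> s \<le> t \<Longrightarrow> hh t \<le> hh s"
proof -
  assume st: "0 \<le> s" "s \<le> t"
  show "hh t \<le> hh s"
  proof (cases "s = 0")
    case True
    show ?thesis
    proof (cases "t = 0")
      case False
      hence "t > 0" using st by simp
      thus ?thesis using True arctan_le_self'[of t] by (simp add: hh_def)
    qed (simp add: True hh_def)
  next
    case False
    thus ?thesis using st hh_dec_pos[of s t] by (simp add: hh_def)
  qed
qed

lemma hh_nonneg: "t \<ge> 0 \<Longrightarrow> hh t \<ge> 0"
  by (simp add: hh_def)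

lemma hh_cont: "continuous_on {0..1} hh"
proof -
  have "continuous (at x within {0..1}) hh" if x: "x \<in> {0..1}" for x
  proof (cases "x = 0")
    case True
    have "((\<lambda>y. (arctan y - arctan 0) / (y - 0)) \<longlongrightarrow> inverse (1 + 0^2)) (at (0::real))"
      using DERIV_arctan[of 0] by (simp only: has_field_derivative_iff)
    hence "((\<lambda>y. arctan y / y) \<longlongrightarrow> 1) (at (0::real))" by simp
    hence "((\<lambda>y. arctan y / y) \<longlongrightarrow> 1) (at (0::real) within {0..1})"
      by (rule tendsto_within_subset) simp
    moreover have "eventually (\<lambda>y. arctan y / y = hh y) (at (0::real) within {0..1})"
      unfolding eventually_at_filter by (rule always_eventually) (simp add: hh_def)
    ultimately have "(hh \<longlongrightarrow> 1) (at 0 within {0..1})"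
      by (rule Lim_transform_eventually)
    thus ?thesis using True by (simp add: continuous_within hh_def)
  next
    case False
    hence x0: "x > 0" using x by simp
    have "eventually (\<lambda>y. y \<in> {0<..}) (nhds x)"
      by (rule eventually_nhds_in_open) (use x0 in auto)
    hence "eventually (\<lambda>y. arctan y / y = hh y) (nhds x)"
      by eventually_elim (simp add: hh_def)
    moreover have "isCont (\<lambda>y. arctan y / y) x" using x0 by (intro continuous_intros) auto
    ultimately have "isCont hh x" by (subst isCont_cong[symmetric])
    thus ?thesis by (rule continuous_at_imp_continuous_within)
  qed
  thus ?thesis by (simp add: continuous_on_eq_continuous_within)
qed

definition CC :: real where "CC = integral {0..1} hh"

lemma A_bound:
  assumes N: "N > 0"
  shows "\<bar>(\<Sum>n<N. arctan (real (Suc n) / N) / real (Suc n)) - CC\<bar> \<le> 1 / N"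
proof -
  have eq: "(\<Sum>n<N. hh (real (Suc n) / N)) / N = (\<Sum>n<N. arctan (real (Suc n) / N) / real (Suc n))"
    using N by (simp add: hh_def sum_divide_distrib field_simps del: of_nat_Suc)
  have h01: "hh 0 - hh 1 \<le> 1" using hh_nonneg[of 1] by (simp add: hh_def)
  have "(hh 0 - hh 1) / N \<le> 1 / N" using h01 N by (simp add: divide_right_mono)
  thus ?thesis using riemann_dec[OF hh_cont hh_dec N] unfolding eq CC_def by linarith
qed

lemma A_lim: "(\<lambda>N. \<Sum>n<N. arctan (real (Suc n) / N) / real (Suc n)) \<longlonglongrightarrow> CC"
proof -
  have "(\<lambda>N. (\<Sum>n<N. arctan (real (Suc n) / N) / real (Suc n)) - CC) \<longlonglongrightarrow> 0"
  proof (rule Lim_null_comparison[OF _ lim_inverse_n'])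
    show "\<forall>\<^sub>F N in sequentially. norm ((\<Sum>n<N. arctan (real (Suc n) / N) / real (Suc n)) - CC) \<le> 1 / real N"
      using eventually_gt_at_top[of 0] by eventually_elim (use A_bound in auto)
  qed
  thus ?thesis by (simp add: LIM_zero_iff)
qed

definition gg :: "real \<Rightarrow> nat \<Rightarrow> nat \<Rightarrow> real" where
  "gg y n k = y / ((real (Suc n) * y)^2 + (real (Suc k))^2)"
definition ss :: "real \<Rightarrow> nat \<Rightarrow> real" where
  "ss y n = 1 / (real (Suc n) * (exp (2 * pi * real (Suc n) * y) - 1))"

lemma gg_sums1:
  assumes y: "y > 0"
  shows "(\<lambda>k. gg y n k) sums ((pi / (exp (2*pi*(real (Suc n) * y)) - 1) - 1 / (2*(real (Suc n) * y)) + pi / 2) / real (Suc n))"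
proof -
  have x: "real (Suc n) * y > 0" using y by simp
  have "(\<lambda>k. (real (Suc n) * y) / ((real (Suc n) * y)^2 + (real (Suc k))^2) / real (Suc n)) sums
     ((pi / (exp (2*pi*(real (Suc n) * y)) - 1) - 1 / (2*(real (Suc n) * y)) + pi / 2) / real (Suc n))"
    by (rule sums_divide[OF coth_pfd[OF x]])
  moreover have "(real (Suc n) * y) / ((real (Suc n) * y)^2 + (real (Suc k))^2) / real (Suc n) = gg y n k" for k
    unfolding gg_def by (simp del: of_nat_Suc)
  ultimately show ?thesis by simp
qed

lemma gg_sums2:
  assumes y: "y > 0"
  shows "(\<lambda>n. gg y n k) sums ((pi / (exp (2*pi*(real (Suc k) / y)) - 1) - 1 / (2*(real (Suc k) / y)) + pi / 2) / real (Suc k))"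
proof -
  have x: "real (Suc k) / y > 0" using y by simp
  have "(\<lambda>n. (real (Suc k) / y) / ((real (Suc k) / y)^2 + (real (Suc n))^2) / real (Suc k)) sums
     ((pi / (exp (2*pi*(real (Suc k) / y)) - 1) - 1 / (2*(real (Suc k) / y)) + pi / 2) / real (Suc k))"
    by (rule sums_divide[OF coth_pfd[OF x]])
  moreover have "(real (Suc k) / y) / ((real (Suc k) / y)^2 + (real (Suc n))^2) / real (Suc k) = gg y n k" for n
  proof -
    have p: "(real (Suc n) * y)^2 + (real (Suc k))^2 > 0" by (intro add_nonneg_pos) auto
    have gen: "(K / y) / ((K / y)^2 + Nn^2) / K = y / ((Nn * y)^2 + K^2)" if K: "K > 0" for K Nn :: real
    proof -
      have d: "(K / y)^2 + Nn^2 = ((Nn * y)^2 + K^2) / y^2" using y by (simp add: field_simps power2_eq_square)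
      have q: "(Nn * y)^2 + K^2 > 0" using K by (intro add_nonneg_pos) auto
      have gen2: "(K / y) / (D / y^2) / K = y / D" if "D > 0" for D
        using that y K by (simp add: field_simps power2_eq_square)
      show ?thesis unfolding d by (rule gen2[OF q])
    qed
    show ?thesis unfolding gg_def by (rule gen) simp
  qed
  ultimately show ?thesis by simp
qed

lemma ss_eq1:
  assumes y: "y > 0"
  shows "ss y n = (1/pi) * (\<Sum>k. gg y n k) + 1 / (2 * pi * (real (Suc n))^2 * y) - 1 / (2 * real (Suc n))"
proof -
  have e: "exp (2*pi*(real (Suc n) * y)) - 1 > 0" using y by simp
  show ?thesis unfolding sums_unique[OF gg_sums1[OF y], symmetric] ss_def using y e
    by (simp add: field_simps power2_eq_square del: of_nat_Suc)
qed

lemma ss_eq2: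
  assumes y: "y > 0"
  shows "ss (1/y) k = (1/pi) * (\<Sum>n. gg y n k) + y / (2 * pi * (real (Suc k))^2) - 1 / (2 * real (Suc k))"
proof -
  have e: "exp (2*pi*(real (Suc k) / y)) - 1 > 0" using y by simp
  show ?thesis unfolding sums_unique[OF gg_sums2[OF y], symmetric] ss_def using y e
    by (simp add: field_simps power2_eq_square del: of_nat_Suc)
qed

lemma gg_summable1: "y > 0 \<Longrightarrow> summable (\<lambda>k. gg y n k)"
  using gg_sums1 sums_summable by blast
lemma gg_summable2: "y > 0 \<Longrightarrow> summable (\<lambda>n. gg y n k)"
  using gg_sums2 sums_summable by blast

lemma key_identity:
  assumes y: "y > 0"
  shows "(\<Sum>n<N. ss y n) - (\<Sum>k<M. ss (1/y) k) =
    (1/pi) * ((\<Sum>n<N. \<Sum>j. gg y n (j+M)) - (\<Sum>k<M. \<Sum>j. gg y (j+N) k))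
    + (1/(2*pi*y)) * (\<Sum>n<N. 1/(real (Suc n))^2) - (y/(2*pi)) * (\<Sum>k<M. 1/(real (Suc k))^2)
    - (1/2) * (\<Sum>n<N. 1/real (Suc n)) + (1/2) * (\<Sum>k<M. 1/real (Suc k))"
proof -
  have L: "(\<Sum>n<N. ss y n) = (1/pi) * (\<Sum>n<N. \<Sum>j. gg y n (j+M)) + (1/pi) * (\<Sum>n<N. \<Sum>k<M. gg y n k)
      + (1/(2*pi*y)) * (\<Sum>n<N. 1/(real (Suc n))^2) - (1/2) * (\<Sum>n<N. 1/real (Suc n))"
  proof -
    have "(\<Sum>n<N. ss y n) = (\<Sum>n<N. (1/pi) * (\<Sum>j. gg y n (j+M)) + (1/pi) * (\<Sum>k<M. gg y n k)
      + (1/(2*pi*y)) * (1/(real (Suc n))^2) - (1/2) * (1/real (Suc n)))"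
    proof (rule sum.cong[OF refl])
      fix n
      have "(\<Sum>k. gg y n k) = (\<Sum>j. gg y n (j+M)) + (\<Sum>k<M. gg y n k)"
        by (rule suminf_split_initial_segment[OF gg_summable1[OF y]])
      thus "ss y n = (1/pi) * (\<Sum>j. gg y n (j+M)) + (1/pi) * (\<Sum>k<M. gg y n k)
      + (1/(2*pi*y)) * (1/(real (Suc n))^2) - (1/2) * (1/real (Suc n))"
        unfolding ss_eq1[OF y] by (simp add: field_simps)
    qed
    thus ?thesis by (simp add: sum.distrib sum_subtractf sum_distrib_left)
  qed
  have R: "(\<Sum>k<M. ss (1/y) k) = (1/pi) * (\<Sum>k<M. \<Sum>j. gg y (j+N) k) + (1/pi) * (\<Sum>k<M. \<Sum>n<N. gg y n k)
      + (y/(2*pi)) * (\<Sum>k<M. 1/(real (Suc k))^2) - (1/2) * (\<Sum>k<M. 1/real (Suc k))"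
  proof -
    have "(\<Sum>k<M. ss (1/y) k) = (\<Sum>k<M. (1/pi) * (\<Sum>j. gg y (j+N) k) + (1/pi) * (\<Sum>n<N. gg y n k)
      + (y/(2*pi)) * (1/(real (Suc k))^2) - (1/2) * (1/real (Suc k)))"
    proof (rule sum.cong[OF refl])
      fix k
      have "(\<Sum>n. gg y n k) = (\<Sum>j. gg y (j+N) k) + (\<Sum>n<N. gg y n k)"
        by (rule suminf_split_initial_segment[OF gg_summable2[OF y]])
      thus "ss (1/y) k = (1/pi) * (\<Sum>j. gg y (j+N) k) + (1/pi) * (\<Sum>n<N. gg y n k)
      + (y/(2*pi)) * (1/(real (Suc k))^2) - (1/2) * (1/real (Suc k))"
        unfolding ss_eq2[OF y] by (simp add: field_simps)
    qed
    thus ?thesis by (simp add: sum.distrib sum_subtractf sum_distrib_left)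
  qed
  have sw: "(\<Sum>n<N. \<Sum>k<M. gg y n k) = (\<Sum>k<M. \<Sum>n<N. gg y n k)" by (rule sum.swap)
  show ?thesis unfolding L R sw by (simp add: algebra_simps)
qed

lemma T1_bounds:
  assumes y: "y > 0" and M: "M > 0"
  shows "(\<Sum>n<N. \<Sum>j. gg y n (j+M)) \<le> (\<Sum>n<N. arctan (real (Suc n) * y / M) / real (Suc n))"
    and "(\<Sum>n<N. arctan (real (Suc n) * y / M) / real (Suc n)) - real N * y / (real M)^2 \<le> (\<Sum>n<N. \<Sum>j. gg y n (j+M))"
proof -
  have each: "(\<Sum>j. gg y n (j+M)) \<le> arctan (real (Suc n) * y / M) / real (Suc n) \<and>
     arctan (real (Suc n) * y / M) / real (Suc n) - y / (real M)^2 \<le> (\<Sum>j. gg y n (j+M))" for n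
  proof -
    define a where "a = real (Suc n) * y"
    have a: "a > 0" using y by (simp add: a_def)
    note tb = tail_bounds[OF a M]
    have eq: "(\<Sum>j. gg y n (j+M)) = y * (\<Sum>j. 1 / (a^2 + (real (Suc (j + M)))^2))"
      unfolding suminf_mult[OF tb(1), symmetric] by (simp add: gg_def a_def)
    have e2: "y * (arctan (a / real M) / a) = arctan (real (Suc n) * y / M) / real (Suc n)"
      using y by (simp add: a_def)
    have e3: "y * (1 / (a^2 + (real M)^2)) \<le> y / (real M)^2"
      using y M by (simp add: frac_le add_pos_nonneg)
    show ?thesis
    proof
      show "(\<Sum>j. gg y n (j+M)) \<le> arctan (real (Suc n) * y / M) / real (Suc n)"
        unfolding eq e2[symmetric] using tb(2) y by (intro mult_left_mono) auto
      have "y * (arctan (a / real M) / a - 1 / (a^2 + (real M)^2)) \<le> (\<Sum>j. gg y n (j+M))"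
        unfolding eq using tb(3) y by (intro mult_left_mono) auto
      thus "arctan (real (Suc n) * y / M) / real (Suc n) - y / (real M)^2 \<le> (\<Sum>j. gg y n (j+M))"
        using e2 e3 by (simp add: right_diff_distrib)
    qed
  qed
  show "(\<Sum>n<N. \<Sum>j. gg y n (j+M)) \<le> (\<Sum>n<N. arctan (real (Suc n) * y / M) / real (Suc n))"
    by (rule sum_mono) (use each in blast)
  have "(\<Sum>n<N. arctan (real (Suc n) * y / M) / real (Suc n) - y / (real M)^2) \<le> (\<Sum>n<N. \<Sum>j. gg y n (j+M))"
    by (rule sum_mono) (use each in blast)
  thus "(\<Sum>n<N. arctan (real (Suc n) * y / M) / real (Suc n)) - real N * y / (real M)^2 \<le> (\<Sum>n<N. \<Sum>j. gg y n (j+M))"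
    by (simp add: sum_subtractf)
qed

lemma T2_bounds:
  assumes y: "y > 0" and N: "N > 0"
  shows "(\<Sum>k<M. \<Sum>j. gg y (j+N) k) \<le> (\<Sum>k<M. arctan (real (Suc k) / (y * N)) / real (Suc k))"
    and "(\<Sum>k<M. arctan (real (Suc k) / (y * N)) / real (Suc k)) - real M / (y * (real N)^2) \<le> (\<Sum>k<M. \<Sum>j. gg y (j+N) k)"
proof -
  have each: "(\<Sum>j. gg y (j+N) k) \<le> arctan (real (Suc k) / (y * N)) / real (Suc k) \<and>
     arctan (real (Suc k) / (y * N)) / real (Suc k) - 1 / (y * (real N)^2) \<le> (\<Sum>j. gg y (j+N) k)" for k
  proof -
    define b where "b = real (Suc k) / y"
    have b: "b > 0" using y by (simp add: b_def)
    note tb = tail_bounds[OF b N]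
    have ge: "gg y (j+N) k = (1/y) * (1 / (b^2 + (real (Suc (j + N)))^2))" for j
    proof -
      have gen: "y / ((S * y)^2 + K^2) = (1/y) * (1 / ((K/y)^2 + S^2))" if "K > 0" for K S :: real
      proof -
        have d: "(K / y)^2 + S^2 = ((S * y)^2 + K^2) / y^2" using y by (simp add: field_simps power2_eq_square)
        have q: "(S * y)^2 + K^2 > 0" using that by (intro add_nonneg_pos) auto
        have gen2: "y / D = (1/y) * (1 / (D / y^2))" if "D > 0" for D
          using that y by (simp add: field_simps power2_eq_square)
        show ?thesis unfolding d by (rule gen2[OF q])
      qed
      show ?thesis unfolding gg_def b_def by (rule gen) simp
    qed
    have eq: "(\<Sum>j. gg y (j+N) k) = (1/y) * (\<Sum>j. 1 / (b^2 + (real (Suc (j + N)))^2))"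
      unfolding suminf_mult[OF tb(1), symmetric] ge ..
    have e2: "(1/y) * (arctan (b / real N) / b) = arctan (real (Suc k) / (y * N)) / real (Suc k)"
      using y by (simp add: b_def field_simps)
    have e3: "(1/y) * (1 / (b^2 + (real N)^2)) \<le> 1 / (y * (real N)^2)"
      using y N by (simp add: frac_le add_pos_nonneg)
    show ?thesis
    proof
      show "(\<Sum>j. gg y (j+N) k) \<le> arctan (real (Suc k) / (y * N)) / real (Suc k)"
        unfolding eq e2[symmetric] using tb(2) y by (intro mult_left_mono) auto
      have "(1/y) * (arctan (b / real N) / b - 1 / (b^2 + (real N)^2)) \<le> (\<Sum>j. gg y (j+N) k)"
        unfolding eq using tb(3) y by (intro mult_left_mono) auto
      thus "arctan (real (Suc k) / (y * N)) / real (Suc k) - 1 / (y * (real N)^2) \<le> (\<Sum>j. gg y (j+N) k)"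
        using e2 e3 by (simp add: right_diff_distrib)
    qed
  qed
  show "(\<Sum>k<M. \<Sum>j. gg y (j+N) k) \<le> (\<Sum>k<M. arctan (real (Suc k) / (y * N)) / real (Suc k))"
    by (rule sum_mono) (use each in blast)
  have "(\<Sum>k<M. arctan (real (Suc k) / (y * N)) / real (Suc k) - 1 / (y * (real N)^2)) \<le> (\<Sum>k<M. \<Sum>j. gg y (j+N) k)"
    by (rule sum_mono) (use each in blast)
  thus "(\<Sum>k<M. arctan (real (Suc k) / (y * N)) / real (Suc k)) - real M / (y * (real N)^2) \<le> (\<Sum>k<M. \<Sum>j. gg y (j+N) k)"
    by (simp add: sum_subtractf)
qed

lemma arctan_lip: "\<bar>arctan u - arctan v\<bar> \<le> \<bar>u - v\<bar>"
proof -
  have *: "arctan b - arctan a \<le> b - a" if "a \<le> b" for a b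
  proof (cases "a = b")
    case False
    hence ab: "a < b" using that by simp
    obtain z where z: "a < z" "z < b" "arctan b - arctan a = (b - a) * inverse (1 + z^2)"
      using MVT2[OF ab, of arctan "\<lambda>s. inverse (1 + s^2)"] DERIV_arctan by blast
    have "inverse (1 + z^2) \<le> 1" by (simp add: inverse_le_1_iff)
    hence "(b - a) * inverse (1 + z^2) \<le> (b - a) * 1" using ab by (intro mult_left_mono) auto
    thus ?thesis using z by simp
  qed simp
  have m: "arctan a \<le> arctan b" if "a \<le> b" for a b using that by (simp add: arctan_le_iff)
  show ?thesis
  proof (cases "u \<le> v")
    case True thus ?thesis using *[OF True] m[OF True] by simp
  next
    case False hence "v \<le> u" by simp
    thus ?thesis using *[of v u] m[of v u] by simp
  qed
qed

lemma A_r_bound: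
  assumes N: "N > 0"
  shows "\<bar>(\<Sum>n<N. arctan (r * real (Suc n) / N) / real (Suc n)) - (\<Sum>n<N. arctan (real (Suc n) / N) / real (Suc n))\<bar> \<le> \<bar>r - 1\<bar>"
proof -
  have "\<bar>arctan (r * real (Suc n) / N) / real (Suc n) - arctan (real (Suc n) / N) / real (Suc n)\<bar> \<le> \<bar>r - 1\<bar> / N" for n
  proof -
    have "\<bar>arctan (r * real (Suc n) / N) - arctan (real (Suc n) / N)\<bar> \<le> \<bar>r * real (Suc n) / N - real (Suc n) / N\<bar>"
      by (rule arctan_lip)
    also have "\<dots> = \<bar>r - 1\<bar> * real (Suc n) / N"
    proof -
      have "r * real (Suc n) / N - real (Suc n) / N = (r - 1) * (real (Suc n) / N)" by (simp add: algebra_simps diff_divide_distrib)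
      thus ?thesis by (simp add: abs_mult)
    qed
    finally have "\<bar>arctan (r * real (Suc n) / N) - arctan (real (Suc n) / N)\<bar> / real (Suc n) \<le> \<bar>r - 1\<bar> * real (Suc n) / N / real (Suc n)"
      by (intro divide_right_mono) auto
    thus ?thesis by (simp add: diff_divide_distrib[symmetric])
  qed
  hence "\<bar>\<Sum>n<N. arctan (r * real (Suc n) / N) / real (Suc n) - arctan (real (Suc n) / N) / real (Suc n)\<bar> \<le> (\<Sum>n<N. \<bar>r - 1\<bar> / N)"
    by (intro order_trans[OF sum_abs] sum_mono) auto
  also have "\<dots> = \<bar>r - 1\<bar>" using N by simp
  finally show ?thesis by (simp add: sum_subtractf)
qed

lemma A_comp:
  assumes Mf: "filterlim Mf at_top sequentially" and r: "r \<longlonglongrightarrow> 1"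
  shows "(\<lambda>N. \<Sum>n<Mf N. arctan (r N * real (Suc n) / Mf N) / real (Suc n)) \<longlonglongrightarrow> CC"
proof -
  have a1: "(\<lambda>N. \<Sum>n<Mf N. arctan (real (Suc n) / Mf N) / real (Suc n)) \<longlonglongrightarrow> CC"
    using filterlim_compose[OF A_lim Mf] by simp
  have a2: "(\<lambda>N. (\<Sum>n<Mf N. arctan (r N * real (Suc n) / Mf N) / real (Suc n)) - (\<Sum>n<Mf N. arctan (real (Suc n) / Mf N) / real (Suc n))) \<longlonglongrightarrow> 0"
  proof (rule Lim_null_comparison)
    have "(\<lambda>N. \<bar>r N - 1\<bar>) \<longlonglongrightarrow> \<bar>1 - 1\<bar>" by (intro tendsto_intros r)
    thus "(\<lambda>N. \<bar>r N - 1\<bar>) \<longlonglongrightarrow> 0" by simp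
    have "eventually (\<lambda>N. 1 \<le> Mf N) sequentially"
      using Mf by (simp add: filterlim_at_top)
    hence "eventually (\<lambda>N. Mf N > 0) sequentially" by eventually_elim simp
    thus "\<forall>\<^sub>F N in sequentially. norm ((\<Sum>n<Mf N. arctan (r N * real (Suc n) / Mf N) / real (Suc n)) - (\<Sum>n<Mf N. arctan (real (Suc n) / Mf N) / real (Suc n))) \<le> \<bar>r N - 1\<bar>"
      by eventually_elim (use A_r_bound in \<open>simp only: real_norm_def\<close>)
  qed
  show ?thesis using tendsto_add[OF a2 a1] by simp
qed

lemma harm_sum: "(\<Sum>n<N. 1 / real (Suc n)) = harm N"
proof (induction N)
  case 0 show ?case by (simp add: harm_def)
next
  case (Suc N) thus ?case by (simp add: harm_Suc divide_inverse del: of_nat_Suc)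
qed

lemma ss_summable:
  assumes y: "y > 0"
  shows "summable (\<lambda>n. ss y n)"
proof (rule summable_comparison_test')
  show "summable (\<lambda>n. (1/(2*pi*y)) * (1 / (real n + 1)^2))"
  proof (intro summable_mult)
    show "summable (\<lambda>n. 1 / (real n + 1)^2)" using sums_summable[OF inverse_squares_sums] by (simp add: add.commute)
  qed
  fix n
  have t: "2 * pi * real (Suc n) * y > 0" using y by simp
  have e: "exp (2 * pi * real (Suc n) * y) - 1 \<ge> 2 * pi * real (Suc n) * y"
    using exp_ge_add_one_self[of "2 * pi * real (Suc n) * y"] by linarith
  have "ss y n = 1 / (real (Suc n) * (exp (2 * pi * real (Suc n) * y) - 1))" by (simp add: ss_def)
  also have "\<dots> \<le> 1 / (real (Suc n) * (2 * pi * real (Suc n) * y))"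
    using t e y by (intro divide_left_mono mult_left_mono mult_pos_pos) auto
  also have "\<dots> = (1/(2*pi*y)) * (1 / (real n + 1)^2)" by (simp add: field_simps power2_eq_square)
  finally have "ss y n \<le> (1/(2*pi*y)) * (1 / (real n + 1)^2)" .
  moreover have "ss y n \<ge> 0" using t by (simp add: ss_def)
  ultimately show "norm (ss y n) \<le> (1/(2*pi*y)) * (1 / (real n + 1)^2)" by simp
qed

theorem S_trans:
  assumes y: "y > 0"
  shows "(\<Sum>n. ss y n) - (\<Sum>n. ss (1/y) n) = pi / (12 * y) - pi * y / 12 + ln y / 2"
proof -
  define Mf where "Mf N = nat \<lceil>real N * y\<rceil>" for N
  have Mlo: "real N * y \<le> real (Mf N)" for N
  proof -
    have "real N * y \<ge> 0" using y by simp
    hence "\<lceil>real N * y\<rceil> \<ge> 0" by simp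
    thus ?thesis unfolding Mf_def by (simp add: le_of_int_ceiling)
  qed
  have Mhi: "real (Mf N) < real N * y + 1" for N
  proof -
    have "real N * y \<ge> 0" using y by simp
    hence "\<lceil>real N * y\<rceil> \<ge> 0" by simp
    moreover have "real_of_int \<lceil>real N * y\<rceil> < real N * y + 1" using ceiling_correct[of "real N * y"] by linarith
    ultimately show ?thesis unfolding Mf_def by simp
  qed
  have Mpos: "Mf N > 0" if "N > 0" for N
  proof -
    have "real N * y > 0" using that y by simp
    hence "real (Mf N) > 0" using Mlo[of N] by linarith
    thus ?thesis by simp
  qed
  have Nlim: "filterlim (\<lambda>N. real N * y) at_top sequentially"
    by (rule filterlim_at_top_mult_tendsto_pos[OF tendsto_const y filterlim_real_sequentially])
  have MlimR: "filterlim (\<lambda>N. real (Mf N)) at_top sequentially"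
    by (rule filterlim_at_top_mono[OF Nlim]) (use Mlo in auto)
  have Mlim: "filterlim Mf at_top sequentially"
    unfolding filterlim_at_top
  proof
    fix Z :: nat
    have "eventually (\<lambda>N. real Z \<le> real (Mf N)) sequentially"
      using MlimR unfolding filterlim_at_top by blast
    thus "eventually (\<lambda>N. Z \<le> Mf N) sequentially" by simp
  qed
  have evN: "eventually (\<lambda>N. N > (0::nat)) sequentially" by (rule eventually_gt_at_top)
  have MN: "(\<lambda>N. real (Mf N) / real N) \<longlonglongrightarrow> y"
  proof (rule tendsto_sandwich[of "\<lambda>N. y" _ _ "\<lambda>N. y + 1 / real N"])
    show "eventually (\<lambda>N. y \<le> real (Mf N) / real N) sequentially"
      using evN by eventually_elim (use Mlo in \<open>simp add: field_simps\<close>)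
    show "eventually (\<lambda>N. real (Mf N) / real N \<le> y + 1 / real N) sequentially"
      using evN
    proof eventually_elim
      case (elim N)
      have "real (Mf N) \<le> real N * y + 1" using Mhi[of N] by simp
      thus ?case using elim by (simp add: field_simps)
    qed
    show "(\<lambda>N. y) \<longlonglongrightarrow> y" by simp
    have "(\<lambda>N. y + 1 / real N) \<longlonglongrightarrow> y + 0" by (intro tendsto_intros lim_inverse_n')
    thus "(\<lambda>N. y + 1 / real N) \<longlonglongrightarrow> y" by simp
  qed
  define r where "r N = real N * y / real (Mf N)" for N
  define r' where "r' N = real (Mf N) / (y * real N)" for N
  have rlim: "r \<longlonglongrightarrow> 1"
  proof -
    have "(\<lambda>N. y / (real (Mf N) / real N)) \<longlonglongrightarrow> y / y" by (intro tendsto_intros MN) (use y in simp)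
    moreover have "eventually (\<lambda>N. y / (real (Mf N) / real N) = r N) sequentially"
      using evN by eventually_elim (use Mpos in \<open>simp add: r_def field_simps\<close>)
    ultimately show ?thesis using y by (simp add: Lim_transform_eventually)
  qed
  have r'lim: "r' \<longlonglongrightarrow> 1"
  proof -
    have "(\<lambda>N. (real (Mf N) / real N) / y) \<longlonglongrightarrow> y / y" by (intro tendsto_intros MN) (use y in simp)
    moreover have "(\<lambda>N. (real (Mf N) / real N) / y) = r'"
      by (rule ext) (simp add: r'_def field_simps)
    ultimately show ?thesis using y by simp
  qed
  have invM: "(\<lambda>N. 1 / real (Mf N)) \<longlonglongrightarrow> 0"
    using filterlim_compose[OF lim_inverse_n' Mlim] by (simp add: o_def)
  have err1: "(\<lambda>N. real N * y / (real (Mf N))^2) \<longlonglongrightarrow> 0"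
  proof -
    have "(\<lambda>N. r N * (1 / real (Mf N))) \<longlonglongrightarrow> 1 * 0" by (intro tendsto_intros rlim invM)
    moreover have "(\<lambda>N. r N * (1 / real (Mf N))) = (\<lambda>N. real N * y / (real (Mf N))^2)"
      by (rule ext) (simp add: r_def power2_eq_square)
    ultimately show ?thesis by simp
  qed
  have err2: "(\<lambda>N. real (Mf N) / (y * (real N)^2)) \<longlonglongrightarrow> 0"
  proof -
    have "(\<lambda>N. r' N * (1 / real N)) \<longlonglongrightarrow> 1 * 0" by (intro tendsto_intros r'lim lim_inverse_n')
    moreover have "(\<lambda>N. r' N * (1 / real N)) = (\<lambda>N. real (Mf N) / (y * (real N)^2))"
      by (rule ext) (simp add: r'_def power2_eq_square)
    ultimately show ?thesis by simp
  qed
  define X1 where "X1 N = (\<Sum>n<N. \<Sum>j. gg y n (j + Mf N))" for N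
  define X2 where "X2 N = (\<Sum>k<Mf N. \<Sum>j. gg y (j + N) k)" for N
  define U1 where "U1 N = (\<Sum>n<N. arctan (real (Suc n) * y / Mf N) / real (Suc n))" for N
  define U2 where "U2 N = (\<Sum>k<Mf N. arctan (real (Suc k) / (y * N)) / real (Suc k))" for N
  have U1lim: "U1 \<longlonglongrightarrow> CC"
  proof -
    have "(\<lambda>N. \<Sum>n<N. arctan (r N * real (Suc n) / N) / real (Suc n)) \<longlonglongrightarrow> CC"
      using A_comp[OF filterlim_ident rlim] by simp
    moreover have "eventually (\<lambda>N. (\<Sum>n<N. arctan (r N * real (Suc n) / N) / real (Suc n)) = U1 N) sequentially"
      using evN
    proof eventually_elim
      case (elim N)
      have "r N * real (Suc n) / real N = real (Suc n) * y / real (Mf N)" for n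
        using elim Mpos[OF elim] by (simp add: r_def field_simps)
      thus ?case by (simp add: U1_def)
    qed
    ultimately show ?thesis by (rule Lim_transform_eventually)
  qed
  have U2lim: "U2 \<longlonglongrightarrow> CC"
  proof -
    have "(\<lambda>N. \<Sum>n<Mf N. arctan (r' N * real (Suc n) / Mf N) / real (Suc n)) \<longlonglongrightarrow> CC"
      by (rule A_comp[OF Mlim r'lim])
    moreover have "eventually (\<lambda>N. (\<Sum>n<Mf N. arctan (r' N * real (Suc n) / Mf N) / real (Suc n)) = U2 N) sequentially"
      using evN
    proof eventually_elim
      case (elim N)
      have "r' N * real (Suc n) / real (Mf N) = real (Suc n) / (y * real N)" for n
        using elim Mpos[OF elim] y by (simp add: r'_def field_simps)
      thus ?case by (simp add: U2_def)
    qed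
    ultimately show ?thesis by (rule Lim_transform_eventually)
  qed
  have X1lim: "X1 \<longlonglongrightarrow> CC"
  proof (rule tendsto_sandwich[of "\<lambda>N. U1 N - real N * y / (real (Mf N))^2" _ _ U1])
    show "eventually (\<lambda>N. U1 N - real N * y / (real (Mf N))^2 \<le> X1 N) sequentially"
      using evN by eventually_elim (use T1_bounds(2)[OF y Mpos] in \<open>simp add: U1_def X1_def\<close>)
    show "eventually (\<lambda>N. X1 N \<le> U1 N) sequentially"
      using evN by eventually_elim (use T1_bounds(1)[OF y Mpos] in \<open>simp add: U1_def X1_def\<close>)
    show "(\<lambda>N. U1 N - real N * y / (real (Mf N))^2) \<longlonglongrightarrow> CC"
      using tendsto_diff[OF U1lim err1] by simp
  qed (rule U1lim)
  have X2lim: "X2 \<longlonglongrightarrow> CC"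
  proof (rule tendsto_sandwich[of "\<lambda>N. U2 N - real (Mf N) / (y * (real N)^2)" _ _ U2])
    show "eventually (\<lambda>N. U2 N - real (Mf N) / (y * (real N)^2) \<le> X2 N) sequentially"
      using evN by eventually_elim (use T2_bounds(2)[OF y] in \<open>simp add: U2_def X2_def\<close>)
    show "eventually (\<lambda>N. X2 N \<le> U2 N) sequentially"
      using evN by eventually_elim (use T2_bounds(1)[OF y] in \<open>simp add: U2_def X2_def\<close>)
    show "(\<lambda>N. U2 N - real (Mf N) / (y * (real N)^2)) \<longlonglongrightarrow> CC"
      using tendsto_diff[OF U2lim err2] by simp
  qed (rule U2lim)
  have Hlim: "(\<lambda>N. harm (Mf N) - harm N) \<longlonglongrightarrow> ln y"
  proof -
    have "(\<lambda>N. (harm (Mf N) - ln (real (Mf N))) - (harm N - ln (real N)) + ln (real (Mf N) / real N))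
        \<longlonglongrightarrow> euler_mascheroni - euler_mascheroni + ln y"
      by (intro tendsto_intros filterlim_compose[OF euler_mascheroni_LIMSEQ Mlim] euler_mascheroni_LIMSEQ MN)
         (use y in simp)
    moreover have "eventually (\<lambda>N. (harm (Mf N) - ln (real (Mf N))) - (harm N - ln (real N)) + ln (real (Mf N) / real N)
        = harm (Mf N) - harm N) sequentially"
      using evN by eventually_elim (use Mpos in \<open>simp add: ln_div\<close>)
    ultimately show ?thesis by (simp add: Lim_transform_eventually)
  qed
  have Qlim: "(\<lambda>N. \<Sum>n<N. 1 / (real (Suc n))^2) \<longlonglongrightarrow> pi^2/6"
    using inverse_squares_sums by (simp add: sums_def add.commute)
  have QMlim: "(\<lambda>N. \<Sum>n<Mf N. 1 / (real (Suc n))^2) \<longlonglongrightarrow> pi^2/6"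
    using filterlim_compose[OF Qlim Mlim] by (simp add: o_def)
  have LHSlim: "(\<lambda>N. (\<Sum>n<N. ss y n) - (\<Sum>k<Mf N. ss (1/y) k)) \<longlonglongrightarrow> (\<Sum>n. ss y n) - (\<Sum>n. ss (1/y) n)"
  proof -
    have y': "1/y > 0" using y by simp
    show ?thesis
      by (intro tendsto_diff summable_LIMSEQ ss_summable[OF y]
            filterlim_compose[OF summable_LIMSEQ[OF ss_summable[OF y']] Mlim])
  qed
  have RHSlim: "(\<lambda>N. (1/pi) * (X1 N - X2 N) + (1/(2*pi*y)) * (\<Sum>n<N. 1/(real (Suc n))^2)
      - (y/(2*pi)) * (\<Sum>k<Mf N. 1/(real (Suc k))^2) + (1/2) * (harm (Mf N) - harm N))
      \<longlonglongrightarrow> (1/pi) * (CC - CC) + (1/(2*pi*y)) * (pi^2/6) - (y/(2*pi)) * (pi^2/6) + (1/2) * ln y"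
    by (intro tendsto_intros X1lim X2lim Qlim QMlim Hlim)
  have eqN: "(\<Sum>n<N. ss y n) - (\<Sum>k<Mf N. ss (1/y) k) =
      (1/pi) * (X1 N - X2 N) + (1/(2*pi*y)) * (\<Sum>n<N. 1/(real (Suc n))^2)
      - (y/(2*pi)) * (\<Sum>k<Mf N. 1/(real (Suc k))^2) + (1/2) * (harm (Mf N) - harm N)" for N
    unfolding key_identity[OF y, of N "Mf N"] X1_def X2_def harm_sum[symmetric] by (simp add: algebra_simps)
  have "(\<Sum>n. ss y n) - (\<Sum>n. ss (1/y) n) = (1/pi) * (CC - CC) + (1/(2*pi*y)) * (pi^2/6) - (y/(2*pi)) * (pi^2/6) + (1/2) * ln y"
    using LIMSEQ_unique[OF LHSlim] RHSlim unfolding eqN by blast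
  also have "\<dots> = pi / (12 * y) - pi * y / 12 + ln y / 2"
    using y by (simp add: field_simps power2_eq_square)
  finally show ?thesis .
qed

theorem corollary1p12:
  fixes \<alpha> \<beta> :: real
  assumes "\<alpha> > 0" and "\<beta> > 0" and "\<alpha> * \<beta> = pi ^ 2"
  shows "(\<Sum>n. exp (real (Suc n) * \<alpha>) / (real (Suc n) * (exp (2 * real (Suc n) * \<alpha>) - 1)))
       - (\<Sum>n. (-1) ^ (Suc n) / (real (Suc n) * (exp (2 * real (Suc n) * \<beta>) - 1)))
       = - (1/2) * ln 2 + (\<alpha> + 2 * \<beta>) / 24"
proof -
  have a: "\<alpha> > 0" and b: "\<beta> > 0" and ab: "\<alpha> * \<beta> = pi ^ 2" using assms by auto
  define y1 where "y1 = \<alpha> / (2 * pi)"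
  define y2 where "y2 = \<alpha> / pi"
  have y1: "y1 > 0" and y2: "y2 > 0" using a by (auto simp: y1_def y2_def)
  have iy1: "1 / y1 = 2 * \<beta> / pi"
  proof -
    have "\<beta> = pi^2 / \<alpha>" using ab a by (simp add: field_simps)
    thus ?thesis using a by (simp add: y1_def field_simps power2_eq_square)
  qed
  have iy2: "1 / y2 = \<beta> / pi"
  proof -
    have "\<beta> = pi^2 / \<alpha>" using ab a by (simp add: field_simps)
    thus ?thesis using a by (simp add: y2_def field_simps power2_eq_square)
  qed
  have t1: "exp (real (Suc n) * \<alpha>) / (real (Suc n) * (exp (2 * real (Suc n) * \<alpha>) - 1)) = ss y1 n - ss y2 n" for n
  proof -
    define E where "E = exp (real (Suc n) * \<alpha>)"
    define k where "k = real (Suc n)"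
    have E1: "E > 1" using a by (simp add: E_def)
    have k: "k > 0" by (simp add: k_def)
    have e1: "exp (2 * pi * real (Suc n) * y1) = E" unfolding E_def y1_def by (simp add: field_simps)
    have e2: "exp (2 * pi * real (Suc n) * y2) = E^2"
      unfolding E_def y2_def power2_eq_square exp_add[symmetric] by (simp add: field_simps)
    have e3: "exp (2 * real (Suc n) * \<alpha>) = E^2"
      unfolding E_def power2_eq_square exp_add[symmetric] by (simp add: field_simps)
    have p1: "E - 1 > 0" using E1 by simp
    have p2: "E^2 - 1 > 0" using E1 by (simp add: one_less_power)
    have f: "E^2 - 1 = (E - 1) * (E + 1)" by (simp add: algebra_simps power2_eq_square)
    have p3: "E + 1 > 0" using E1 by simp
    have "E / (k * ((E - 1) * (E + 1))) = 1 / (k * (E - 1)) - 1 / (k * ((E - 1) * (E + 1)))"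
    proof -
      have g: "(F - 1) / (k * (D * F)) = 1 / (k * D) - 1 / (k * (D * F))" if "D > 0" "F > 0" for D F
        using that k by (simp add: field_simps)
      have "E = (E + 1) - 1" by simp
      hence "E / (k * ((E - 1) * (E + 1))) = ((E + 1) - 1) / (k * ((E - 1) * (E + 1)))" by simp
      also have "\<dots> = 1 / (k * (E - 1)) - 1 / (k * ((E - 1) * (E + 1)))" by (rule g) (use p1 p3 in auto)
      finally show ?thesis .
    qed
    hence "E / (k * (E^2 - 1)) = 1 / (k * (E - 1)) - 1 / (k * (E^2 - 1))" unfolding f .
    thus ?thesis unfolding ss_def e1 e2 e3 by (simp add: E_def k_def)
  qed
  have s1: "summable (ss y1)" "summable (ss y2)" using ss_summable y1 y2 by auto
  have first: "(\<Sum>n. exp (real (Suc n) * \<alpha>) / (real (Suc n) * (exp (2 * real (Suc n) * \<alpha>) - 1)))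
      = (\<Sum>n. ss y1 n) - (\<Sum>n. ss y2 n)"
    unfolding t1 by (rule suminf_diff[OF s1, symmetric])
  define c where "c n = ss (1/y2) n" for n
  have cdef: "c n = 1 / (real (Suc n) * (exp (2 * real (Suc n) * \<beta>) - 1))" for n
  proof -
    have "2 * pi * real (Suc n) * (\<beta> / pi) = 2 * real (Suc n) * \<beta>" by simp
    thus ?thesis unfolding c_def ss_def iy2 by simp
  qed
  have codd: "c (2 * j + 1) = (1/2) * ss (1/y1) j" for j
  proof -
    have "exp (2 * pi * real (Suc j) * (1/y1)) = exp (2 * real (Suc (2 * j + 1)) * \<beta>)"
      unfolding iy1 by (simp add: field_simps)
    thus ?thesis unfolding cdef ss_def by (simp add: field_simps)
  qed
  have sc: "summable c" unfolding c_def using ss_summable[of "1/y2"] y2 by simp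
  have sd: "summable (ss (1/y1))" using ss_summable[of "1/y1"] y1 by simp
  define bb where "bb m = (if even m then 0 else c m)" for m
  have bsums: "bb sums ((1/2) * (\<Sum>j. ss (1/y1) j))"
  proof -
    have "(\<lambda>j. (1/2) * ss (1/y1) j) sums ((1/2) * (\<Sum>j. ss (1/y1) j))"
      by (rule sums_mult[OF summable_sums[OF sd]])
    hence "(\<lambda>m. if even m then 0 else (1/2) * ss (1/y1) ((m - 1) div 2)) sums ((1/2) * (\<Sum>j. ss (1/y1) j))"
      by (rule sums_if')
    moreover have "(if even m then 0 else (1/2) * ss (1/y1) ((m - 1) div 2)) = bb m" for m
    proof (cases "even m")
      case False
      then obtain j where m: "m = 2 * j + 1" by (metis oddE)
      show ?thesis using codd[of j] by (simp add: bb_def m)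
    qed (simp add: bb_def)
    ultimately show ?thesis by simp
  qed
  have alt: "(-1) ^ (Suc n) / (real (Suc n) * (exp (2 * real (Suc n) * \<beta>) - 1)) = 2 * bb n - c n" for n
    by (cases "even n") (auto simp: bb_def cdef)
  have second: "(\<Sum>n. (-1) ^ (Suc n) / (real (Suc n) * (exp (2 * real (Suc n) * \<beta>) - 1)))
      = (\<Sum>j. ss (1/y1) j) - (\<Sum>n. ss (1/y2) n)"
  proof -
    have "(\<lambda>n. 2 * bb n - c n) sums (2 * ((1/2) * (\<Sum>j. ss (1/y1) j)) - (\<Sum>n. c n))"
      by (intro sums_diff sums_mult bsums summable_sums[OF sc])
    thus ?thesis unfolding alt by (simp add: sums_iff c_def)
  qed
  have T1: "(\<Sum>n. ss y1 n) - (\<Sum>n. ss (1/y1) n) = pi / (12 * y1) - pi * y1 / 12 + ln y1 / 2"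
    by (rule S_trans[OF y1])
  have T2: "(\<Sum>n. ss y2 n) - (\<Sum>n. ss (1/y2) n) = pi / (12 * y2) - pi * y2 / 12 + ln y2 / 2"
    by (rule S_trans[OF y2])
  have lnq: "ln y1 = ln y2 - ln 2"
  proof -
    have "y1 = y2 / 2" by (simp add: y1_def y2_def)
    hence "ln y1 = ln (y2 / 2)" by (rule arg_cong)
    also have "\<dots> = ln y2 - ln 2" using y2 by (simp add: ln_div)
    finally show ?thesis .
  qed
  have pb1: "pi / (12 * y1) = \<beta> / 6"
  proof -
    have "pi / (12 * y1) = pi * (1 / y1) / 12" by (simp add: field_simps)
    thus ?thesis unfolding iy1 by simp
  qed
  have pb2: "pi / (12 * y2) = \<beta> / 12"
  proof -
    have "pi / (12 * y2) = pi * (1 / y2) / 12" by (simp add: field_simps)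
    thus ?thesis unfolding iy2 by simp
  qed
  show ?thesis unfolding first second
    using T1 T2 lnq pb1 pb2 by (simp add: y1_def y2_def field_simps)
qed

end
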